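(* Let $\mathcal{A}=\{1,\dots,K\}$ with $K\ge2$, $a^*\in\mathcal{A}$, $\sigma>0$, and for each $a\in\mathcal{A}$ let $m_a\ge1$ and $\vec{y}_a\in\mathbb{R}^{m_a}$. For $\vec{\epsilon}_a\in\mathbb{R}^{m_a}$ let $\tilde{\mu}_a=(\vec{y}_a+\vec{\epsilon}_a)^T\mathbf{1}/m_a$. Given any $\delta>0$, consider $$P_3:\ \min_{\{\vec{\epsilon}_a\}}\sum_{a\in\mathcal{A}}\|\vec{\epsilon}_a\|_2^2\ \ \text{s.t.}\ \ \sum_{a\neq a^*}\Phi\!\left(\frac{\tilde{\mu}_a-\tilde{\mu}_{a^*}}{\sigma^3\sqrt{1/m_a+1/m_{a^*}}}\right)\le\delta,\ \ \tilde{\mu}_a-\tilde{\mu}_{a^*}\le0\ \forall a\neq a^*.$$ Then $P_3$ is a quadratic program with convex constraints and, for every reward instance $\{\vec{y}_a\}_{a\in\mathcal{A}}$, it has at least one optimal solution. Moreover, poisoning with such a solution is a feasible offline attack on Thompson Sampling for Gaussian distributions: after the attack, the algorithm pulls $a^*$ at round $T+1$ with probability at least $1-\delta$.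
   Context: Offline attack setting: a bandit algorithm pulls arms $a_1,\dots,a_T$ and receives rewards $r_t=\mu_{a_t}+\eta_t$ with $\eta_t$ i.i.d. $\mathcal{N}(0,\sigma^2)$; $m_a$ is the number of rounds $t\le T$ with $a_t=a$, $\vec{y}_a=(r_t:a_t=a)^T$, and the attacker replaces these rewards by $\vec{y}_a+\vec{\epsilon}_a$ before the algorithm updates, so $\tilde{\mu}_a$ is the post-attack empirical mean. $\Phi$ is the standard normal CDF and $\mathbf{1}$ the all-ones vector. Thompson Sampling for Gaussian distributions (Jeffreys prior) at round $T+1$ independently samples $\theta_a\sim\mathcal{N}(\tilde{\mu}_a/\sigma^2,\sigma^2/m_a)$ for each arm and pulls $\arg\max_a\theta_a$. *)

theory Defs
  imports "HOL-Probability.Probability"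
begin

definition Phi :: "real \<Rightarrow> real" where
  "Phi x = measure (density lborel std_normal_density) {..x}"

text \<open>Arms are 1..K; reward vector of arm a is y a i for i < m a;
  perturbation vectors eps a i for i < m a (other indices irrelevant).\<close>

definition mu_tilde :: "(nat \<Rightarrow> nat) \<Rightarrow> (nat \<Rightarrow> nat \<Rightarrow> real) \<Rightarrow> (nat \<Rightarrow> nat \<Rightarrow> real) \<Rightarrow> nat \<Rightarrow> real" where
  "mu_tilde m y eps a = (\<Sum>i<m a. y a i + eps a i) / real (m a)"

definition P3_obj :: "nat \<Rightarrow> (nat \<Rightarrow> nat) \<Rightarrow> (nat \<Rightarrow> nat \<Rightarrow> real) \<Rightarrow> real" where
  "P3_obj K m eps = (\<Sum>a\<in>{1..K}. \<Sum>i<m a. (eps a i)\<^sup>2)"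

definition P3_feasible :: "nat \<Rightarrow> nat \<Rightarrow> real \<Rightarrow> real \<Rightarrow> (nat \<Rightarrow> nat) \<Rightarrow> (nat \<Rightarrow> nat \<Rightarrow> real)
    \<Rightarrow> (nat \<Rightarrow> nat \<Rightarrow> real) \<Rightarrow> bool" where
  "P3_feasible K astar \<sigma> \<delta> m y eps \<longleftrightarrow>
     (\<Sum>a\<in>{1..K} - {astar}.
        Phi ((mu_tilde m y eps a - mu_tilde m y eps astar)
             / (\<sigma> ^ 3 * sqrt (1 / real (m a) + 1 / real (m astar))))) \<le> \<delta>
   \<and> (\<forall>a\<in>{1..K} - {astar}. mu_tilde m y eps a - mu_tilde m y eps astar \<le> 0)"

definition P3_optimal :: "nat \<Rightarrow> nat \<Rightarrow> real \<Rightarrow> real \<Rightarrow> (nat \<Rightarrow> nat) \<Rightarrow> (nat \<Rightarrow> nat \<Rightarrow> real)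
    \<Rightarrow> (nat \<Rightarrow> nat \<Rightarrow> real) \<Rightarrow> bool" where
  "P3_optimal K astar \<sigma> \<delta> m y eps \<longleftrightarrow>
     P3_feasible K astar \<sigma> \<delta> m y eps \<and>
     (\<forall>eps'. P3_feasible K astar \<sigma> \<delta> m y eps' \<longrightarrow> P3_obj K m eps \<le> P3_obj K m eps')"

text \<open>Thompson sampling (Gaussian, Jeffreys prior) at round T+1 after the attack:
  independent samples theta_a ~ N(mu_tilde_a / sigma^2, sigma^2 / m_a) (variance).\<close>
definition TS_sample :: "nat \<Rightarrow> real \<Rightarrow> (nat \<Rightarrow> nat) \<Rightarrow> (nat \<Rightarrow> nat \<Rightarrow> real) \<Rightarrow> (nat \<Rightarrow> nat \<Rightarrow> real)
    \<Rightarrow> (nat \<Rightarrow> real) measure" where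
  "TS_sample K \<sigma> m y eps =
     PiM {1..K} (\<lambda>a. density lborel
        (normal_density (mu_tilde m y eps a / \<sigma>\<^sup>2) (sqrt (\<sigma>\<^sup>2 / real (m a)))))"

definition TS_pulls :: "nat \<Rightarrow> nat \<Rightarrow> (nat \<Rightarrow> real) set" where
  "TS_pulls K astar = {\<theta>. \<forall>a\<in>{1..K} - {astar}. \<theta> a < \<theta> astar}"

end

theory Submission
  imports Defs
begin


abbreviation "NN \<equiv> density lborel std_normal_density"

lemma NN_real_distribution: "real_distribution NN"
  by (auto simp: real_distribution_def real_distribution_axioms_def prob_space_normal_density)

lemma Phi_cdf: "Phi = cdf NN"
  by (simp add: Phi_def cdf_def fun_eq_iff)

lemma cont_snd: "continuous_on S std_normal_density"
  unfolding normal_density_def by (intro continuous_intros) auto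

lemma Phi_diff:
  assumes "a < x"
  shows "Phi x - Phi a = integral {a..x} std_normal_density"
proof -
  interpret real_distribution NN by (rule NN_real_distribution)
  have 1: "Phi x - Phi a = measure NN {a<..x}"
    using cdf_diff_eq[OF assms] by (simp add: Phi_cdf)
  have hi: "(std_normal_density has_integral integral {a..x} std_normal_density) {a..x}"
    using integrable_continuous_interval[OF cont_snd] by (simp add: integrable_integral)
  have hi2: "(std_normal_density has_integral integral {a..x} std_normal_density) {a<..x}"
    using hi by (rule has_integral_spike_set_eq[THEN iffD1, rotated -1])
      (auto intro: negligible_subset[of "{a}"])
  have "emeasure NN {a<..x} = (\<integral>\<^sup>+ y. ennreal (std_normal_density y) * indicator {a<..x} y \<partial>lborel)"
    by (simp add: emeasure_density)
  also have "\<dots> = ennreal (integral {a..x} std_normal_density)"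
    by (rule nn_integral_has_integral_lebesgue'[OF _ hi2]) simp
  finally have "measure NN {a<..x} = integral {a..x} std_normal_density"
    unfolding measure_def
    by (simp add: integral_nonneg[OF hi[THEN has_integral_integrable]])
  with 1 show ?thesis by simp
qed

lemma Phi_deriv: "(Phi has_real_derivative std_normal_density t) (at t)"
proof -
  define a where "a = t - 1"
  define b where "b = t + 1"
  have "((\<lambda>x. integral {a..x} std_normal_density) has_real_derivative std_normal_density t) (at t within {a..b})"
    by (rule integral_has_real_derivative[OF cont_snd]) (auto simp: a_def b_def)
  then have d: "((\<lambda>x. integral {a..x} std_normal_density) has_real_derivative std_normal_density t) (at t)"
    using at_within_interior[of t "{a..b}"] by (simp add: a_def b_def)
  have "((\<lambda>x. Phi a + integral {a..x} std_normal_density) has_real_derivative 0 + std_normal_density t) (at t)"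
    by (rule DERIV_add[OF DERIV_const d])
  then have D2: "((\<lambda>x. Phi a + integral {a..x} std_normal_density) has_real_derivative std_normal_density t) (at t)"
    by simp
  have EQ: "\<And>x. x \<in> {a<..} \<Longrightarrow> Phi a + integral {a..x} std_normal_density = Phi x"
  proof -
    fix x :: real assume "x \<in> {a<..}"
    then have "a < x" by simp
    from Phi_diff[OF this] show "Phi a + integral {a..x} std_normal_density = Phi x" by linarith
  qed
  show ?thesis
    by (rule has_field_derivative_transform_within_open[OF D2 _ _ EQ, where S="{a<..}"]) (auto simp: a_def)
qed

lemma Phi_cont: "continuous_on S Phi"
  using Phi_deriv by (intro continuous_at_imp_continuous_on ballI DERIV_isCont)

lemma Phi_cont_intro[continuous_intros]: "continuous_on S f \<Longrightarrow> continuous_on S (\<lambda>x. Phi (f x))"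
  by (rule continuous_on_compose2[OF Phi_cont]) auto

lemma snd_mono: "x \<le> y \<Longrightarrow> y \<le> 0 \<Longrightarrow> std_normal_density x \<le> std_normal_density y"
proof -
  assume a: "x \<le> y" "y \<le> 0"
  have "(-y)^2 \<le> (-x)^2" using a by (intro power_mono) auto
  then have "- x\<^sup>2 / 2 \<le> - y\<^sup>2 / 2" by simp
  then have "exp (- x\<^sup>2 / 2) \<le> exp (- y\<^sup>2 / 2)" by simp
  then show ?thesis unfolding std_normal_density_def
    by (intro mult_left_mono) auto
qed

lemma Phi_convex: "convex_on {..0} Phi"
  by (rule convex_on_realI[OF _ Phi_deriv]) (auto intro: snd_mono)

lemma Phi_lim: "(Phi \<longlongrightarrow> 0) at_bot"
proof -
  interpret real_distribution NN by (rule NN_real_distribution)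
  show ?thesis using cdf_lim_at_bot by (simp add: Phi_cdf)
qed

lemma compact_PiE_UNIV:
  assumes "\<And>i. compact (S i)"
  shows "compact (PiE UNIV S :: ('a \<Rightarrow> 'b::topological_space) set)"
proof -
  have "compactin (product_topology (\<lambda>_. euclidean) UNIV) (PiE UNIV S)"
    by (simp add: compactin_PiE assms)
  then show ?thesis by (simp add: euclidean_product_topology)
qed



lemma prob_lower_from_dist:
  assumes "prob_space M"
    and D: "distributed M lborel Z std_normal_density"
  shows "measure M {\<omega>\<in>space M. Z \<omega> \<le> r} = Phi r"
proof -
  have Zm: "Z \<in> measurable M lborel" using D by (simp add: distributed_def)
  have "measure M {\<omega>\<in>space M. Z \<omega> \<le> r} = measure M (Z -` {..r} \<inter> space M)"
    by (rule arg_cong[where f="measure M"]) auto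
  also have "\<dots> = measure (distr M lborel Z) {..r}"
    by (rule measure_distr[symmetric, OF Zm]) simp
  also have "\<dots> = Phi r"
    using distributed_distr_eq_density[OF D] by (simp add: Phi_def)
  finally show ?thesis .
qed

lemma ts_bound:
  fixes I :: "nat set" and mu s :: "nat \<Rightarrow> real" and c :: nat
  assumes fin: "finite I" and cI: "c \<in> I" and spos: "\<And>i. i \<in> I \<Longrightarrow> s i > 0"
  shows "prob_space (PiM I (\<lambda>a. density lborel (normal_density (mu a) (s a))))
    \<and> measure (PiM I (\<lambda>a. density lborel (normal_density (mu a) (s a))))
       ({\<theta>. \<forall>a\<in>I-{c}. \<theta> a < \<theta> c} \<inter> space (PiM I (\<lambda>a. density lborel (normal_density (mu a) (s a)))))
     \<ge> 1 - (\<Sum>a\<in>I-{c}. Phi ((mu a - mu c) / sqrt ((s a)\<^sup>2 + (s c)\<^sup>2)))"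
proof -
  define s' where "s' = (\<lambda>i. if i \<in> I then s i else 1)"
  have s'pos: "s' i > 0" for i using spos by (simp add: s'_def)
  define N where "N = (\<lambda>a. density lborel (normal_density (mu a) (s' a)))"
  define M where "M = PiM I N"
  interpret Ni: prob_space "N i" for i unfolding N_def by (rule prob_space_normal_density[OF s'pos])
  interpret P: product_prob_space N I by unfold_locales
  interpret prob_space M unfolding M_def by (rule P.prob_space_axioms)
  have setsN[simp]: "sets (N i) = sets borel" for i by (simp add: N_def)
  have comp: "distr M (N i) (\<lambda>\<omega>. \<omega> i) = N i" if "i \<in> I" for i
    unfolding M_def by (rule P.PiM_component[OF that])
  have meas: "(\<lambda>\<omega>. \<omega> i) \<in> measurable M borel" if "i \<in> I" for i
    using measurable_component_singleton[OF that, of N] unfolding M_def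
    by (simp add: measurable_cong_sets[OF refl setsN])
  have distC: "distributed M lborel (\<lambda>\<omega>. \<omega> i) (normal_density (mu i) (s i))" if "i \<in> I" for i
  proof -
    have "distr M lborel (\<lambda>\<omega>. \<omega> i) = distr M (N i) (\<lambda>\<omega>. \<omega> i)"
      by (rule distr_cong) auto
    also have "\<dots> = density lborel (normal_density (mu i) (s i))"
      using comp[OF that] that by (simp add: N_def s'_def)
    finally show ?thesis using meas[OF that] by (simp add: distributed_def)
  qed
  have indN: "indep_vars N (\<lambda>i \<omega>. \<omega> i) I"
  proof (subst indep_vars_iff_distr_eq_PiM')
    show "I \<noteq> {}" using cI by auto
    show "random_variable (N i) (\<lambda>\<omega>. \<omega> i)" if "i \<in> I" for i
      using measurable_component_singleton[OF that, of N] unfolding M_def .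
    have "distr M (Pi\<^sub>M I N) (\<lambda>x. \<lambda>i\<in>I. x i) = distr M M (\<lambda>x. x)"
      by (rule distr_cong) (auto simp: M_def space_PiM)
    also have "\<dots> = M" by simp
    also have "\<dots> = (\<Pi>\<^sub>M i\<in>I. distr M (N i) (\<lambda>\<omega>. \<omega> i))"
      unfolding M_def by (rule PiM_cong) (auto simp: comp[unfolded M_def])
    finally show "distr M (Pi\<^sub>M I N) (\<lambda>x. \<lambda>i\<in>I. x i) = (\<Pi>\<^sub>M i\<in>I. distr M (N i) (\<lambda>\<omega>. \<omega> i))" .
  qed
  have ind: "indep_vars (\<lambda>_. borel) (\<lambda>i \<omega>. \<omega> i) I"
    using indN unfolding indep_vars_def
    by (simp add: measurable_cong_sets[OF refl setsN])
  have Ea: "measure M {\<omega>\<in>space M. \<omega> c \<le> \<omega> a} = Phi ((mu a - mu c) / sqrt ((s a)\<^sup>2 + (s c)\<^sup>2))"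
    if aI: "a \<in> I" and ac: "a \<noteq> c" for a
  proof -
    define S where "S = sqrt ((s a)\<^sup>2 + (s c)\<^sup>2)"
    have Spos: "S > 0" unfolding S_def using spos[OF aI] spos[OF cI] by (intro real_sqrt_gt_zero add_pos_pos) auto
    have "indep_var borel (\<lambda>\<omega>. \<omega> a) borel (\<lambda>\<omega>. \<Sum>i\<in>{c}. \<omega> i)"
      by (rule indep_vars_sum) (auto intro: indep_vars_subset[OF ind] simp: aI cI ac)
    then have iv: "indep_var borel (\<lambda>\<omega>. \<omega> a) borel (\<lambda>\<omega>. \<omega> c)" by simp
    have d1: "distributed M lborel (\<lambda>\<omega>. \<omega> a - \<omega> c) (normal_density (mu a - mu c) S)"
      unfolding S_def by (rule diff_indep_normal[OF iv spos[OF aI] spos[OF cI] distC[OF aI] distC[OF cI]])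
    have d2: "distributed M lborel (\<lambda>\<omega>. 0 + -1 * (\<omega> a - \<omega> c)) (normal_density (0 + -1 * (mu a - mu c)) (\<bar>-1\<bar> * S))"
      by (rule normal_density_affine[OF d1 Spos]) simp
    have d3: "distributed M lborel (\<lambda>\<omega>. ((0 + -1 * (\<omega> a - \<omega> c)) - (0 + -1 * (mu a - mu c))) / S) std_normal_density"
      using d2 normal_standard_normal_convert[OF Spos] by simp
    have "measure M {\<omega>\<in>space M. \<omega> c \<le> \<omega> a}
        = measure M {\<omega>\<in>space M. ((0 + -1 * (\<omega> a - \<omega> c)) - (0 + -1 * (mu a - mu c))) / S \<le> (mu a - mu c) / S}"
      using Spos by (intro arg_cong[where f="measure M"]) (auto simp: divide_simps)
    also have "\<dots> = Phi ((mu a - mu c) / S)"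
      by (rule prob_lower_from_dist[OF prob_space_axioms d3])
    finally show ?thesis by (simp add: S_def)
  qed
  define E where "E = (\<lambda>a. {\<omega>\<in>space M. \<omega> c \<le> \<omega> a})"
  have Esets: "E a \<in> events" if "a \<in> I" for a
    unfolding E_def using meas[OF that] meas[OF cI] by measurable
  have T: "{\<theta>. \<forall>a\<in>I-{c}. \<theta> a < \<theta> c} \<inter> space M = space M - (\<Union>a\<in>I-{c}. E a)"
    by (auto simp: E_def not_le) (metis DiffI singletonD leD)
  have U: "(\<Union>a\<in>I-{c}. E a) \<in> events" using Esets fin by auto
  have "measure M (\<Union>a\<in>I-{c}. E a) \<le> (\<Sum>a\<in>I-{c}. measure M (E a))"
    by (rule finite_measure_subadditive_finite) (use fin Esets in auto)
  also have "\<dots> = (\<Sum>a\<in>I-{c}. Phi ((mu a - mu c) / sqrt ((s a)\<^sup>2 + (s c)\<^sup>2)))"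
    by (rule sum.cong) (auto simp: E_def Ea)
  finally have "measure M ({\<theta>. \<forall>a\<in>I-{c}. \<theta> a < \<theta> c} \<inter> space M)
      \<ge> 1 - (\<Sum>a\<in>I-{c}. Phi ((mu a - mu c) / sqrt ((s a)\<^sup>2 + (s c)\<^sup>2)))"
    unfolding T prob_compl[OF U] by simp
  moreover have "M = PiM I (\<lambda>a. density lborel (normal_density (mu a) (s a)))"
    unfolding M_def N_def by (rule PiM_cong) (auto simp: s'_def)
  ultimately show ?thesis using prob_space_axioms by simp
qed



lemma mu_tilde_comb:
  "mu_tilde m y (\<lambda>a i. t * e1 a i + (1 - t) * e2 a i) a = t * mu_tilde m y e1 a + (1 - t) * mu_tilde m y e2 a"
proof -
  have "(\<Sum>i<m a. y a i + (t * e1 a i + (1 - t) * e2 a i)) = t * (\<Sum>i<m a. y a i + e1 a i) + (1 - t) * (\<Sum>i<m a. y a i + e2 a i)"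
  proof -
    have "(\<Sum>i<m a. y a i + (t * e1 a i + (1 - t) * e2 a i)) = (\<Sum>i<m a. t * (y a i + e1 a i) + (1 - t) * (y a i + e2 a i))"
      by (rule sum.cong) (auto simp: algebra_simps)
    also have "\<dots> = t * (\<Sum>i<m a. y a i + e1 a i) + (1 - t) * (\<Sum>i<m a. y a i + e2 a i)"
      by (subst sum_distrib_left, subst sum_distrib_left, rule sum.distrib)
    finally show ?thesis .
  qed
  then show ?thesis unfolding mu_tilde_def by (simp add: add_divide_distrib)
qed

lemma feasible_convex:
  assumes cpos: "\<And>a. a \<in> {1..K} - {astar} \<Longrightarrow> \<sigma> ^ 3 * sqrt (1 / real (m a) + 1 / real (m astar)) > 0"
    and F1: "P3_feasible K astar \<sigma> \<delta> m y e1" and F2: "P3_feasible K astar \<sigma> \<delta> m y e2"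
    and t: "0 \<le> t" "t \<le> 1"
  shows "P3_feasible K astar \<sigma> \<delta> m y (\<lambda>a i. t * e1 a i + (1 - t) * e2 a i)"
proof -
  let ?e = "\<lambda>a i. t * e1 a i + (1 - t) * e2 a i"
  let ?c = "\<lambda>a. \<sigma> ^ 3 * sqrt (1 / real (m a) + 1 / real (m astar))"
  let ?d = "\<lambda>e a. mu_tilde m y e a - mu_tilde m y e astar"
  have de: "?d ?e a = t * ?d e1 a + (1 - t) * ?d e2 a" for a
    by (simp only: mu_tilde_comb) (simp add: algebra_simps)
  have n1: "?d e1 a \<le> 0" and n2: "?d e2 a \<le> 0" if "a \<in> {1..K} - {astar}" for a
    using F1 F2 that unfolding P3_feasible_def by auto
  have lin: "\<forall>a\<in>{1..K} - {astar}. ?d ?e a \<le> 0"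
  proof
    fix a assume a: "a \<in> {1..K} - {astar}"
    have "t * ?d e1 a \<le> 0" using n1[OF a] t by (simp add: mult_nonneg_nonpos)
    moreover have "(1 - t) * ?d e2 a \<le> 0" using n2[OF a] t by (simp add: mult_nonneg_nonpos)
    ultimately show "?d ?e a \<le> 0" by (simp add: de)
  qed
  have ph: "Phi (?d ?e a / ?c a) \<le> t * Phi (?d e1 a / ?c a) + (1 - t) * Phi (?d e2 a / ?c a)"
    if a: "a \<in> {1..K} - {astar}" for a
  proof -
    have c: "?c a > 0" using cpos[OF a] .
    have x1: "?d e1 a / ?c a \<in> {..0}" using n1[OF a] c by (simp add: divide_nonpos_pos)
    have x2: "?d e2 a / ?c a \<in> {..0}" using n2[OF a] c by (simp add: divide_nonpos_pos)
    have "Phi ((1 - (1 - t)) *\<^sub>R (?d e1 a / ?c a) + (1 - t) *\<^sub>R (?d e2 a / ?c a))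
        \<le> (1 - (1 - t)) * Phi (?d e1 a / ?c a) + (1 - t) * Phi (?d e2 a / ?c a)"
      by (rule convex_onD[OF Phi_convex]) (use t x1 x2 in auto)
    moreover have "(1 - (1 - t)) *\<^sub>R (?d e1 a / ?c a) + (1 - t) *\<^sub>R (?d e2 a / ?c a) = ?d ?e a / ?c a"
      by (simp add: de add_divide_distrib)
    ultimately show ?thesis by simp
  qed
  have "(\<Sum>a\<in>{1..K} - {astar}. Phi (?d ?e a / ?c a))
      \<le> (\<Sum>a\<in>{1..K} - {astar}. t * Phi (?d e1 a / ?c a) + (1 - t) * Phi (?d e2 a / ?c a))"
    by (rule sum_mono) (rule ph)
  also have "\<dots> = t * (\<Sum>a\<in>{1..K} - {astar}. Phi (?d e1 a / ?c a)) + (1 - t) * (\<Sum>a\<in>{1..K} - {astar}. Phi (?d e2 a / ?c a))"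
    by (simp add: sum.distrib sum_distrib_left)
  also have "\<dots> \<le> t * \<delta> + (1 - t) * \<delta>"
    using F1 F2 t unfolding P3_feasible_def by (intro add_mono mult_left_mono) auto
  also have "\<dots> = \<delta>" by (simp add: algebra_simps)
  finally show ?thesis using lin unfolding P3_feasible_def by simp
qed

lemma obj_convex:
  assumes t: "0 \<le> t" "t \<le> 1"
  shows "P3_obj K m (\<lambda>a i. t * e1 a i + (1 - t) * e2 a i) \<le> t * P3_obj K m e1 + (1 - t) * P3_obj K m e2"
proof -
  have sq: "(t * u + (1 - t) * v)\<^sup>2 \<le> t * u\<^sup>2 + (1 - t) * v\<^sup>2" for u v :: real
  proof -
    have "t * u\<^sup>2 + (1 - t) * v\<^sup>2 - (t * u + (1 - t) * v)\<^sup>2 = t * (1 - t) * (u - v)\<^sup>2"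
      by (simp add: power2_eq_square algebra_simps)
    moreover have "t * (1 - t) * (u - v)\<^sup>2 \<ge> 0" using t by simp
    ultimately show ?thesis by linarith
  qed
  have "P3_obj K m (\<lambda>a i. t * e1 a i + (1 - t) * e2 a i)
      \<le> (\<Sum>a\<in>{1..K}. \<Sum>i<m a. t * (e1 a i)\<^sup>2 + (1 - t) * (e2 a i)\<^sup>2)"
    unfolding P3_obj_def by (intro sum_mono sq)
  also have "\<dots> = t * P3_obj K m e1 + (1 - t) * P3_obj K m e2"
    unfolding P3_obj_def by (simp add: sum.distrib sum_distrib_left)
  finally show ?thesis .
qed



definition restr_eps :: "nat \<Rightarrow> (nat \<Rightarrow> nat) \<Rightarrow> (nat \<Rightarrow> nat \<Rightarrow> real) \<Rightarrow> (nat \<Rightarrow> nat \<Rightarrow> real)" where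
  "restr_eps K m e = (\<lambda>a i. if a \<in> {1..K} \<and> i < m a then e a i else 0)"

lemma obj_restr: "P3_obj K m (restr_eps K m e) = P3_obj K m e"
  unfolding P3_obj_def restr_eps_def by (intro sum.cong) auto

lemma mu_restr: "a \<in> {1..K} \<Longrightarrow> mu_tilde m y (restr_eps K m e) a = mu_tilde m y e a"
  unfolding mu_tilde_def restr_eps_def by (intro arg_cong2[where f="(/)"] sum.cong) auto

lemma feas_restr:
  assumes "astar \<in> {1..K}"
  shows "P3_feasible K astar \<sigma> \<delta> m y (restr_eps K m e) = P3_feasible K astar \<sigma> \<delta> m y e"
  unfolding P3_feasible_def using assms
  by (simp add: mu_restr)

lemma cont_coord[continuous_intros]: "continuous_on S (\<lambda>e::nat \<Rightarrow> nat \<Rightarrow> real. e a i)"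
proof -
  have "continuous_on UNIV (\<lambda>e::nat \<Rightarrow> nat \<Rightarrow> real. e a)" by simp
  then have "continuous_on UNIV (\<lambda>e::nat \<Rightarrow> nat \<Rightarrow> real. e a i)"
    by (rule continuous_on_product_then_coordinatewise)
  then show ?thesis by (rule continuous_on_subset) auto
qed

lemma cont_mu[continuous_intros]: "continuous_on S (\<lambda>e. mu_tilde m y e a)"
  unfolding mu_tilde_def divide_inverse by (intro continuous_intros)

lemma cont_obj[continuous_intros]: "continuous_on S (\<lambda>e. P3_obj K m e)"
  unfolding P3_obj_def by (intro continuous_intros)

lemma closed_feas: "closed {e. P3_feasible K astar \<sigma> \<delta> m y e}"
proof -
  have eq: "{e. P3_feasible K astar \<sigma> \<delta> m y e} =
    {e. (\<Sum>a\<in>{1..K} - {astar}.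
        Phi ((mu_tilde m y e a - mu_tilde m y e astar)
             * inverse (\<sigma> ^ 3 * sqrt (1 / real (m a) + 1 / real (m astar))))) \<le> \<delta>}
    \<inter> (\<Inter>a\<in>{1..K} - {astar}. {e. mu_tilde m y e a - mu_tilde m y e astar \<le> 0})"
    unfolding P3_feasible_def divide_inverse by auto
  show ?thesis unfolding eq
    by (intro closed_Int closed_INT ballI closed_Collect_le continuous_intros)
qed

lemma exists_feasible:
  assumes K: "K \<ge> 2" and as: "astar \<in> {1..K}" and sp: "\<sigma> > 0" and dp: "\<delta> > 0"
    and mpos: "\<forall>a\<in>{1..K}. m a \<ge> 1"
  shows "\<exists>e. P3_feasible K astar \<sigma> \<delta> m y e"
proof -
  define base where "base = (\<lambda>a. mu_tilde m y (\<lambda>_ _. 0) a)"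
  define c where "c = (\<lambda>a. \<sigma> ^ 3 * sqrt (1 / real (m a) + 1 / real (m astar)))"
  have cpos: "c a > 0" if "a \<in> {1..K}" for a
    using that mpos as sp unfolding c_def
    by (intro mult_pos_pos zero_less_power real_sqrt_gt_zero add_pos_pos) (auto simp: Suc_le_eq)
  define e where "e = (\<lambda>L::real. \<lambda>a::nat. \<lambda>i::nat. if a = astar then L else 0)"
  have mu_e: "mu_tilde m y (e L) a = base a + (if a = astar then L else 0)" if "a \<in> {1..K}" for a L
  proof -
    have m0: "real (m a) \<noteq> 0" using mpos that by (auto simp: Suc_le_eq)
    have "(\<Sum>i<m a. y a i + e L a i) = (\<Sum>i<m a. y a i) + real (m a) * (if a = astar then L else 0)"
      by (simp add: sum.distrib e_def)
    then show ?thesis using m0 unfolding mu_tilde_def base_def by (simp add: add_divide_distrib)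
  qed
  have lim: "eventually (\<lambda>L. Phi ((base a - base astar - L) / c a) < \<delta> / real K) at_top"
    if a: "a \<in> {1..K}" for a
  proof -
    have "filterlim (\<lambda>L. (base a - base astar - L) / c a) at_bot at_top"
      unfolding filterlim_at_bot
    proof
      fix Z :: real
      show "eventually (\<lambda>L. (base a - base astar - L) / c a \<le> Z) at_top"
        using eventually_ge_at_top[of "base a - base astar - Z * c a"]
        by eventually_elim (use cpos[OF a] in \<open>simp add: pos_divide_le_eq\<close>)
    qed
    from filterlim_compose[OF Phi_lim this]
    have "((\<lambda>L. Phi ((base a - base astar - L) / c a)) \<longlongrightarrow> 0) at_top" by (simp add: o_def)
    moreover have "\<delta> / real K > 0" using dp K by simp
    ultimately show ?thesis by (rule order_tendstoD)
  qed
  have ev1: "eventually (\<lambda>L. Phi ((base a - base astar - L) / c a) < \<delta> / real K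
      \<and> base a - base astar - L \<le> 0) at_top" if a: "a \<in> {1..K} - {astar}" for a
  proof -
    have e1: "eventually (\<lambda>L. Phi ((base a - base astar - L) / c a) < \<delta> / real K) at_top"
      using lim a by blast
    have e2: "eventually (\<lambda>L. base a - base astar - L \<le> 0) at_top"
      using eventually_ge_at_top[of "base a - base astar"] by (rule eventually_mono) simp
    show ?thesis using eventually_conj[OF e1 e2] .
  qed
  have ev: "eventually (\<lambda>L. \<forall>a\<in>{1..K} - {astar}. Phi ((base a - base astar - L) / c a) < \<delta> / real K
      \<and> base a - base astar - L \<le> 0) at_top"
  proof (rule eventually_ball_finite)
    show "finite ({1..K} - {astar})" by simp
    show "\<forall>a\<in>{1..K} - {astar}. eventually (\<lambda>L. Phi ((base a - base astar - L) / c a) < \<delta> / real K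
      \<and> base a - base astar - L \<le> 0) at_top" using ev1 by blast
  qed
  then obtain N where N: "\<forall>n\<ge>N. \<forall>a\<in>{1..K} - {astar}. Phi ((base a - base astar - n) / c a) < \<delta> / real K
      \<and> base a - base astar - n \<le> 0"
    unfolding eventually_at_top_linorder by (elim exE) (rule that)
  define L where "L = N"
  have L: "\<forall>a\<in>{1..K} - {astar}. Phi ((base a - base astar - L) / c a) < \<delta> / real K
      \<and> base a - base astar - L \<le> 0"
    using spec[OF N, of N] unfolding L_def by simp
  have d: "mu_tilde m y (e L) a - mu_tilde m y (e L) astar = base a - base astar - L"
    if "a \<in> {1..K} - {astar}" for a
    using that as by (simp add: mu_e)
  have "(\<Sum>a\<in>{1..K} - {astar}. Phi ((mu_tilde m y (e L) a - mu_tilde m y (e L) astar) / c a))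
      \<le> (\<Sum>a\<in>{1..K} - {astar}. \<delta> / real K)"
    by (rule sum_mono) (use L d in \<open>auto simp: less_imp_le\<close>)
  also have "\<dots> = real (K - 1) * (\<delta> / real K)" using as by (simp add: card_Diff_singleton)
  also have "\<dots> \<le> real K * (\<delta> / real K)"
    using dp K by (intro mult_right_mono) auto
  also have "\<dots> = \<delta>" using K by simp
  finally have "P3_feasible K astar \<sigma> \<delta> m y (e L)"
    unfolding P3_feasible_def using L d by (auto simp: c_def)
  then show ?thesis by blast
qed



lemma term_le_obj:
  assumes "a \<in> {1..K}" "i < m a"
  shows "(e a i)\<^sup>2 \<le> P3_obj K m e"
proof -
  have "(e a i)\<^sup>2 \<le> (\<Sum>j<m a. (e a j)\<^sup>2)"
    by (rule member_le_sum) (use assms in auto)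
  also have "\<dots> \<le> (\<Sum>b\<in>{1..K}. \<Sum>j<m b. (e b j)\<^sup>2)"
    by (rule member_le_sum[where f="\<lambda>b. \<Sum>j<m b. (e b j)\<^sup>2"]) (use assms in \<open>auto intro: sum_nonneg\<close>)
  finally show ?thesis unfolding P3_obj_def .
qed

lemma exists_optimal:
  assumes as: "astar \<in> {1..K}" and Fe0: "P3_feasible K astar \<sigma> \<delta> m y e0"
  shows "\<exists>eps. P3_optimal K astar \<sigma> \<delta> m y eps"
proof -
  define rel where "rel = (\<lambda>a i. a \<in> {1..K} \<and> i < m a)"
  define S where "S = {e. P3_feasible K astar \<sigma> \<delta> m y e \<and> P3_obj K m e \<le> P3_obj K m e0
     \<and> (\<forall>a i. \<not> rel a i \<longrightarrow> e a i = 0)}"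
  define R where "R = sqrt (P3_obj K m e0)"
  define B where "B = (PiE UNIV (\<lambda>a. PiE UNIV (\<lambda>i. if rel a i then {-R..R} else {0})) :: (nat \<Rightarrow> nat \<Rightarrow> real) set)"
  have cB: "compact B"
    unfolding B_def by (intro compact_PiE_UNIV) auto
  have SB: "S \<subseteq> B"
  proof
    fix e assume e: "e \<in> S"
    have "e a i \<in> (if rel a i then {-R..R} else {0})" for a i
    proof (cases "rel a i")
      case True
      then have "(e a i)\<^sup>2 \<le> P3_obj K m e0"
        using term_le_obj[of a K i m e] e unfolding rel_def S_def by auto
      then have "sqrt ((e a i)\<^sup>2) \<le> R" unfolding R_def by (rule real_sqrt_le_mono)
      then have "\<bar>e a i\<bar> \<le> R" by simp
      then show ?thesis using True by auto
    next
      case False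
      then show ?thesis using e unfolding S_def by auto
    qed
    then show "e \<in> B" unfolding B_def by auto
  qed
  have eqS: "S = {e. P3_feasible K astar \<sigma> \<delta> m y e} \<inter> {e. P3_obj K m e \<le> P3_obj K m e0}
      \<inter> (\<Inter>p\<in>{p. \<not> rel (fst p) (snd p)}. {e. e (fst p) (snd p) = 0})"
    unfolding S_def by auto
  have clS: "closed S"
    unfolding eqS
    by (intro closed_Int closed_feas closed_INT ballI closed_Collect_le closed_Collect_eq continuous_intros)
  have cS: "compact S"
  proof -
    have "compact (S \<inter> B)" using clS cB by (rule closed_Int_compact)
    moreover have "S \<inter> B = S" using SB by auto
    ultimately show ?thesis by simp
  qed
  have r0: "restr_eps K m e0 \<in> S"
    unfolding S_def using Fe0 feas_restr[OF as] obj_restr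
    by (auto simp: restr_eps_def rel_def)
  then have "S \<noteq> {}" by auto
  from continuous_attains_inf[OF cS this cont_obj]
  obtain es where es: "es \<in> S" and esmin: "\<And>e. e \<in> S \<Longrightarrow> P3_obj K m es \<le> P3_obj K m e"
    by blast
  have "P3_optimal K astar \<sigma> \<delta> m y es"
    unfolding P3_optimal_def
  proof (intro conjI allI impI)
    show "P3_feasible K astar \<sigma> \<delta> m y es" using es unfolding S_def by simp
    fix e' assume F': "P3_feasible K astar \<sigma> \<delta> m y e'"
    show "P3_obj K m es \<le> P3_obj K m e'"
    proof (cases "P3_obj K m e' \<le> P3_obj K m e0")
      case True
      have "restr_eps K m e' \<in> S"
        unfolding S_def using F' True feas_restr[OF as] obj_restr
        by (auto simp: restr_eps_def rel_def)
      from esmin[OF this] show ?thesis by (simp add: obj_restr)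
    next
      case False
      have "P3_obj K m es \<le> P3_obj K m e0" using es unfolding S_def by simp
      then show ?thesis using False by simp
    qed
  qed
  then show ?thesis by blast
qed

lemma arg_eq:
  fixes \<sigma> p q u v :: real
  assumes s: "\<sigma> > 0" and p: "p > 0" and q: "q > 0"
  shows "(u / \<sigma>\<^sup>2 - v / \<sigma>\<^sup>2) / sqrt ((sqrt (\<sigma>\<^sup>2 / p))\<^sup>2 + (sqrt (\<sigma>\<^sup>2 / q))\<^sup>2)
       = (u - v) / (\<sigma> ^ 3 * sqrt (1 / p + 1 / q))"
proof -
  have "(sqrt (\<sigma>\<^sup>2 / p))\<^sup>2 + (sqrt (\<sigma>\<^sup>2 / q))\<^sup>2 = \<sigma>\<^sup>2 * (1 / p + 1 / q)"
    using p q by (simp add: field_simps)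
  then have "sqrt ((sqrt (\<sigma>\<^sup>2 / p))\<^sup>2 + (sqrt (\<sigma>\<^sup>2 / q))\<^sup>2) = \<sigma> * sqrt (1 / p + 1 / q)"
    using s by (simp add: real_sqrt_mult)
  moreover have "sqrt (1 / p + 1 / q) > 0" using p q by (intro real_sqrt_gt_zero add_pos_pos) auto
  ultimately show ?thesis using s
    by (simp add: field_simps power3_eq_cube power2_eq_square)
qed



theorem theorem3:
  fixes K astar :: nat and \<sigma> \<delta> :: real and m :: "nat \<Rightarrow> nat" and y :: "nat \<Rightarrow> nat \<Rightarrow> real"
  assumes "K \<ge> 2" and "astar \<in> {1..K}" and "\<sigma> > 0" and "\<delta> > 0"
    and "\<forall>a\<in>{1..K}. m a \<ge> 1"
  shows
    "(\<forall>e1 e2 (t::real). P3_feasible K astar \<sigma> \<delta> m y e1 \<and> P3_feasible K astar \<sigma> \<delta> m y e2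
        \<and> 0 \<le> t \<and> t \<le> 1 \<longrightarrow>
        P3_feasible K astar \<sigma> \<delta> m y (\<lambda>a i. t * e1 a i + (1 - t) * e2 a i))
   \<and> (\<forall>e1 e2 (t::real). 0 \<le> t \<and> t \<le> 1 \<longrightarrow>
        P3_obj K m (\<lambda>a i. t * e1 a i + (1 - t) * e2 a i)
          \<le> t * P3_obj K m e1 + (1 - t) * P3_obj K m e2)
   \<and> (\<exists>eps. P3_optimal K astar \<sigma> \<delta> m y eps)
   \<and> (\<forall>eps. P3_optimal K astar \<sigma> \<delta> m y eps \<longrightarrow>
        prob_space (TS_sample K \<sigma> m y eps) \<and>
        measure (TS_sample K \<sigma> m y eps) (TS_pulls K astar \<inter> space (TS_sample K \<sigma> m y eps))
          \<ge> 1 - \<delta>)"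
proof -
  note K = assms(1) and as = assms(2) and sp = assms(3) and dp = assms(4) and mpos = assms(5)
  have mp: "real (m a) > 0" if "a \<in> {1..K}" for a
    using mpos that by (auto simp: Suc_le_eq)
  have cpos: "\<sigma> ^ 3 * sqrt (1 / real (m a) + 1 / real (m astar)) > 0" if "a \<in> {1..K} - {astar}" for a
    using mp[of a] mp[OF as] that sp
    by (intro mult_pos_pos zero_less_power real_sqrt_gt_zero add_pos_pos) auto
  have P1: "\<forall>e1 e2 (t::real). P3_feasible K astar \<sigma> \<delta> m y e1 \<and> P3_feasible K astar \<sigma> \<delta> m y e2
        \<and> 0 \<le> t \<and> t \<le> 1 \<longrightarrow>
        P3_feasible K astar \<sigma> \<delta> m y (\<lambda>a i. t * e1 a i + (1 - t) * e2 a i)"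
  proof (intro allI impI)
    fix e1 e2 and t :: real
    assume H: "P3_feasible K astar \<sigma> \<delta> m y e1 \<and> P3_feasible K astar \<sigma> \<delta> m y e2 \<and> 0 \<le> t \<and> t \<le> 1"
    show "P3_feasible K astar \<sigma> \<delta> m y (\<lambda>a i. t * e1 a i + (1 - t) * e2 a i)"
      by (rule feasible_convex) (use cpos H in auto)
  qed
  have P2: "\<forall>e1 e2 (t::real). 0 \<le> t \<and> t \<le> 1 \<longrightarrow>
        P3_obj K m (\<lambda>a i. t * e1 a i + (1 - t) * e2 a i)
          \<le> t * P3_obj K m e1 + (1 - t) * P3_obj K m e2"
    using obj_convex by blast
  have P3: "\<exists>eps. P3_optimal K astar \<sigma> \<delta> m y eps"
    using exists_feasible[OF K as sp dp mpos] exists_optimal[OF as] by blast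
  have P4: "prob_space (TS_sample K \<sigma> m y eps) \<and>
        measure (TS_sample K \<sigma> m y eps) (TS_pulls K astar \<inter> space (TS_sample K \<sigma> m y eps))
          \<ge> 1 - \<delta>" if opt: "P3_optimal K astar \<sigma> \<delta> m y eps" for eps
  proof -
    have F: "P3_feasible K astar \<sigma> \<delta> m y eps" using opt unfolding P3_optimal_def by simp
    define mu where "mu = (\<lambda>a. mu_tilde m y eps a / \<sigma>\<^sup>2)"
    define s where "s = (\<lambda>a. sqrt (\<sigma>\<^sup>2 / real (m a)))"
    have spos: "s i > 0" if "i \<in> {1..K}" for i
      unfolding s_def using mp[OF that] sp by simp
    have TS: "TS_sample K \<sigma> m y eps = PiM {1..K} (\<lambda>a. density lborel (normal_density (mu a) (s a)))"
      unfolding TS_sample_def mu_def s_def ..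
    have TP: "TS_pulls K astar = {\<theta>. \<forall>a\<in>{1..K}-{astar}. \<theta> a < \<theta> astar}"
      unfolding TS_pulls_def ..
    have sumeq: "(\<Sum>a\<in>{1..K}-{astar}. Phi ((mu a - mu astar) / sqrt ((s a)\<^sup>2 + (s astar)\<^sup>2)))
       = (\<Sum>a\<in>{1..K} - {astar}.
        Phi ((mu_tilde m y eps a - mu_tilde m y eps astar)
             / (\<sigma> ^ 3 * sqrt (1 / real (m a) + 1 / real (m astar)))))"
    proof (rule sum.cong[OF refl])
      fix a assume a: "a \<in> {1..K} - {astar}"
      show "Phi ((mu a - mu astar) / sqrt ((s a)\<^sup>2 + (s astar)\<^sup>2)) =
        Phi ((mu_tilde m y eps a - mu_tilde m y eps astar)
             / (\<sigma> ^ 3 * sqrt (1 / real (m a) + 1 / real (m astar))))"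
        unfolding mu_def s_def using arg_eq[OF sp mp[of a] mp[OF as]] a by simp
    qed
    have sle: "(\<Sum>a\<in>{1..K}-{astar}. Phi ((mu a - mu astar) / sqrt ((s a)\<^sup>2 + (s astar)\<^sup>2))) \<le> \<delta>"
      unfolding sumeq using F unfolding P3_feasible_def by simp
    from ts_bound[of "{1..K}" astar s mu, OF _ as spos]
    show ?thesis unfolding TS TP using sle by auto
  qed
  show ?thesis using P1 P2 P3 P4 by blast
qed

end
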